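(* Let $\mathcal{I}_1\sqcup\cdots\sqcup\mathcal{I}_K=[N]$ be a partition of the modes into nonempty cells, let $\sigma_n$ denote the index of the cell containing mode $n$, let $\tilde I_1,\dots,\tilde I_K$ be positive integers and $I_n=\tilde I_{\sigma_n}$. Let $\ell:\mathbb{R}\times\mathbb{R}\to\mathbb{R}$ be differentiable in its second argument, and let $\mathcal{X}\in\mathbb{R}^{I_1\times\cdots\times I_N}$ be symmetric with respect to the partition $\mathcal{I}_1\sqcup\cdots\sqcup\mathcal{I}_K$. Define, for $\boldsymbol{\lambda}\in\mathbb{R}^r$ and $\mathbf{A}_k\in\mathbb{R}^{\tilde I_k\times r}$, $$\mathcal{F}(\boldsymbol{\lambda},\mathbf{A}_1,\dots,\mathbf{A}_K)=\sum_{i}\ell(x_i,m_i),\qquad \mathcal{M}=\sum_{j=1}^r\lambda_j(\mathbf{A}_{\sigma_1})_{:,j}\circ\cdots\circ(\mathbf{A}_{\sigma_N})_{:,j},$$ and let $\mathcal{Y}$ have entries $y_i=\frac{\partial\ell}{\partial m}(x_i,m_i)$. Then for each $k\in[K]$ and any $k'\in\mathcal{I}_k$, $$\frac{\partial\mathcal{F}}{\partial\mathbf{A}_k} = |\mathcal{I}_k|\,\mathbf{Y}_{(k')}\Big(\textstyle\bigodot_{j\neq k'}\mathbf{A}_{\sigma_j}\Big)\operatorname{diag}(\boldsymbol{\lambda}),$$ where $\bigodot_{j\neq t}\mathbf{A}_{\sigma_j}=\mathbf{A}_{\sigma_N}\odot\cdots\odot\mathbf{A}_{\sigma_{t+1}}\odot\mathbf{A}_{\sigma_{t-1}}\odot\cdots\odot\mathbf{A}_{\sigma_1}$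 and $|\mathcal{I}_k|$ is the number of modes in $\mathcal{I}_k$.
   Context: A tensor is symmetric with respect to the partition if its entries are unchanged under every permutation of its $N$ indices that maps each cell $\mathcal{I}_\ell$ to itself, i.e. $x_{(i_{\pi(1)},\dots,i_{\pi(N)})}=x_{(i_1,\dots,i_N)}$. $\circ$ is the outer product; $\odot$ is the Khatri–Rao product ($j$-th column of $\mathbf{A}\odot\mathbf{B}$ is $\mathbf{A}_{:,j}\otimes\mathbf{B}_{:,j}$). The mode-$t$ matricization $\mathbf{Y}_{(t)}\in\mathbb{R}^{I_t\times\prod_{j\neq t}I_j}$ places $y_{i_1,\dots,i_N}$ in row $i_t$ and column $1+\sum_{k\neq t}(i_k-1)\prod_{m<k,\,m\neq t}I_m$. $\partial\mathcal{F}/\partial\mathbf{A}_k$ is the matrix of partial derivatives with the shape of $\mathbf{A}_k$. *)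

theory Defs
  imports "HOL-Analysis.Analysis" "HOL-Combinatorics.Permutations"
begin

text \<open>Conventions (0-based): modes are 0..<N, cells are 0..<K, the cell of mode n is
  sig n.  Index tuples of an N-way tensor are lists of length N; the mode sizes are
  given by a function I :: nat \<Rightarrow> nat.  Matrices are functions nat \<Rightarrow> nat \<Rightarrow> real
  (row, column), with the dimensions carried separately.\<close>

definition tidx :: "nat \<Rightarrow> (nat \<Rightarrow> nat) \<Rightarrow> nat list set" where
  "tidx N I = {is. length is = N \<and> (\<forall>n<N. is ! n < I n)}"

definition partition_symmetric ::
  "nat \<Rightarrow> (nat \<Rightarrow> nat) \<Rightarrow> (nat \<Rightarrow> nat) \<Rightarrow> (nat list \<Rightarrow> real) \<Rightarrow> bool" where
  "partition_symmetric N I sig X \<longleftrightarrow>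
     (\<forall>\<pi> is. \<pi> permutes {..<N} \<longrightarrow> (\<forall>n<N. sig (\<pi> n) = sig n) \<longrightarrow> is \<in> tidx N I \<longrightarrow>
        X (map (\<lambda>n. is ! \<pi> n) [0..<N]) = X is)"

definition cp_model ::
  "nat \<Rightarrow> nat \<Rightarrow> (nat \<Rightarrow> nat) \<Rightarrow> (nat \<Rightarrow> real) \<Rightarrow> (nat \<Rightarrow> nat \<Rightarrow> nat \<Rightarrow> real) \<Rightarrow> nat list \<Rightarrow> real" where
  "cp_model N r sig lam A is = (\<Sum>j<r. lam j * (\<Prod>n<N. A (sig n) (is ! n) j))"

definition cp_loss ::
  "(real \<Rightarrow> real \<Rightarrow> real) \<Rightarrow> nat \<Rightarrow> (nat \<Rightarrow> nat) \<Rightarrow> nat \<Rightarrow> (nat \<Rightarrow> nat) \<Rightarrow> (nat list \<Rightarrow> real)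
     \<Rightarrow> (nat \<Rightarrow> real) \<Rightarrow> (nat \<Rightarrow> nat \<Rightarrow> nat \<Rightarrow> real) \<Rightarrow> real" where
  "cp_loss ell N I r sig X lam A = (\<Sum>is\<in>tidx N I. ell (X is) (cp_model N r sig lam A is))"

text \<open>Column index of an entry in the mode-t matricization (0-based version of
  1 + sum_{k \<noteq> t} (i_k - 1) prod_{m<k, m \<noteq> t} I_m).\<close>
definition mat_col :: "nat \<Rightarrow> (nat \<Rightarrow> nat) \<Rightarrow> nat \<Rightarrow> nat list \<Rightarrow> nat" where
  "mat_col N I t is = (\<Sum>k\<in>{..<N} - {t}. (is ! k) * (\<Prod>m\<in>{..<k} - {t}. I m))"

definition matricize :: "nat \<Rightarrow> (nat \<Rightarrow> nat) \<Rightarrow> nat \<Rightarrow> (nat list \<Rightarrow> real) \<Rightarrow> nat \<Rightarrow> nat \<Rightarrow> real" where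
  "matricize N I t Y p c = Y (THE is. is \<in> tidx N I \<and> is ! t = p \<and> mat_col N I t is = c)"

text \<open>Khatri-Rao product A \<odot> B where B has IB rows: column j is A_{:,j} \<otimes> B_{:,j}.\<close>
definition khatri_rao :: "nat \<Rightarrow> (nat \<Rightarrow> nat \<Rightarrow> real) \<Rightarrow> (nat \<Rightarrow> nat \<Rightarrow> real) \<Rightarrow> nat \<Rightarrow> nat \<Rightarrow> real" where
  "khatri_rao IB A B i j = A (i div IB) j * B (i mod IB) j"

fun khatri_rao_list :: "((nat \<Rightarrow> nat \<Rightarrow> real) \<times> nat) list \<Rightarrow> nat \<Rightarrow> nat \<Rightarrow> real" where
  "khatri_rao_list [] = (\<lambda>i j. 1)"
| "khatri_rao_list ((M, _) # Ms) = khatri_rao (\<Prod>x\<leftarrow>Ms. snd x) M (khatri_rao_list Ms)"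

definition kr_except ::
  "nat \<Rightarrow> (nat \<Rightarrow> nat) \<Rightarrow> (nat \<Rightarrow> nat) \<Rightarrow> (nat \<Rightarrow> nat \<Rightarrow> nat \<Rightarrow> real) \<Rightarrow> nat \<Rightarrow> nat \<Rightarrow> nat \<Rightarrow> real" where
  "kr_except N I sig A t =
     khatri_rao_list (map (\<lambda>n. (A (sig n), I n)) (rev (filter (\<lambda>n. n \<noteq> t) [0..<N])))"

definition matmul :: "nat \<Rightarrow> (nat \<Rightarrow> nat \<Rightarrow> real) \<Rightarrow> (nat \<Rightarrow> nat \<Rightarrow> real) \<Rightarrow> nat \<Rightarrow> nat \<Rightarrow> real" where
  "matmul n P Q i j = (\<Sum>c<n. P i c * Q c j)"

definition diag_mat :: "(nat \<Rightarrow> real) \<Rightarrow> nat \<Rightarrow> nat \<Rightarrow> real" where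
  "diag_mat v i j = (if i = j then v i else 0)"

end

theory Submission
  imports Defs
begin


fun enc :: "(nat \<Rightarrow> nat) \<Rightarrow> nat list \<Rightarrow> (nat \<Rightarrow> nat) \<Rightarrow> nat" where
  "enc I [] d = 0"
| "enc I (n # L) d = d n * (\<Prod>m\<leftarrow>L. I m) + enc I L d"

lemma dm: "(b::nat) < P \<Longrightarrow> (a*P+b) div P = a \<and> (a*P+b) mod P = b"
  by simp

lemma enc_lt: "\<forall>n\<in>set L. d n < I n \<Longrightarrow> enc I L d < (\<Prod>m\<leftarrow>L. I m)"
proof (induction L)
  case Nil then show ?case by simp
next
  case (Cons n L)
  then have a: "enc I L d < (\<Prod>m\<leftarrow>L. I m)" and b: "d n + 1 \<le> I n" by auto
  have "d n * (\<Prod>m\<leftarrow>L. I m) + enc I L d < d n * (\<Prod>m\<leftarrow>L. I m) + (\<Prod>m\<leftarrow>L. I m)" using a by simp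
  also have "\<dots> = (d n + 1) * (\<Prod>m\<leftarrow>L. I m)" by simp
  also have "\<dots> \<le> I n * (\<Prod>m\<leftarrow>L. I m)" using b by (intro mult_right_mono) auto
  finally show ?case by simp
qed

lemma enc_cong: "\<forall>n\<in>set L. d n = d' n \<Longrightarrow> enc I L d = enc I L d'"
  by (induction L) auto

lemma enc_inj: "\<forall>n\<in>set L. d n < I n \<Longrightarrow> \<forall>n\<in>set L. d' n < I n \<Longrightarrow> enc I L d = enc I L d'
   \<Longrightarrow> \<forall>n\<in>set L. d n = d' n"
proof (induction L)
  case Nil then show ?case by simp
next
  case (Cons n L)
  let ?P = "\<Prod>m\<leftarrow>L. I m"
  have a: "enc I L d < ?P" "enc I L d' < ?P" using Cons.prems by (auto intro!: enc_lt)
  have e: "d n * ?P + enc I L d = d' n * ?P + enc I L d'" using Cons.prems by simp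
  have 1: "(d n * ?P + enc I L d) div ?P = d n \<and> (d n * ?P + enc I L d) mod ?P = enc I L d"
    using a(1) by (rule dm)
  have 2: "(d' n * ?P + enc I L d') div ?P = d' n \<and> (d' n * ?P + enc I L d') mod ?P = enc I L d'"
    using a(2) by (rule dm)
  have x: "d n = d' n" using 1 2 e by metis
  have y: "enc I L d = enc I L d'" using 1 2 e by metis
  have "\<forall>n\<in>set L. d n = d' n" by (rule Cons.IH) (use Cons.prems y in auto)
  then show ?case using x by simp
qed

lemma enc_surj: "distinct L \<Longrightarrow> c < (\<Prod>m\<leftarrow>L. I m) \<Longrightarrow> \<exists>d. (\<forall>n\<in>set L. d n < I n) \<and> enc I L d = c"
proof (induction L arbitrary: c)
  case Nil then show ?case by simp
next
  case (Cons n L)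
  let ?P = "\<Prod>m\<leftarrow>L. I m"
  have P0: "?P > 0" using Cons.prems by (auto intro: Nat.gr0I)
  obtain d where d: "\<forall>n\<in>set L. d n < I n" "enc I L d = c mod ?P"
    using Cons.IH[of "c mod ?P"] Cons.prems P0 by auto
  have cn: "c div ?P < I n" using Cons.prems by (simp add: less_mult_imp_div_less mult.commute)
  have nL: "n \<notin> set L" using Cons.prems by simp
  let ?d = "d(n := c div ?P)"
  have "enc I L ?d = enc I L d" by (rule enc_cong) (use nL in auto)
  then have "enc I (n # L) ?d = c" using d by simp
  moreover have "\<forall>m\<in>set (n#L). ?d m < I m" using d cn by auto
  ultimately show ?case by blast
qed

lemma kr_enc: "\<forall>n\<in>set L. d n < I n \<Longrightarrow>
  khatri_rao_list (map (\<lambda>n. (A (sig n), I n)) L) (enc I L d) j = (\<Prod>n\<leftarrow>L. A (sig n) (d n) j)"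
proof (induction L)
  case Nil then show ?case by simp
next
  case (Cons n L)
  let ?P = "\<Prod>m\<leftarrow>L. I m"
  have a: "enc I L d < ?P" using Cons.prems by (auto intro!: enc_lt)
  have sp: "(\<Prod>x\<leftarrow>map (\<lambda>n. (A (sig n), I n)) L. snd x) = ?P" by (simp add: o_def)
  have 1: "(d n * ?P + enc I L d) div ?P = d n \<and> (d n * ?P + enc I L d) mod ?P = enc I L d"
    using a by (rule dm)
  have sp2: "map (snd \<circ> (\<lambda>n. (A (sig n), I n))) L = map I L" by auto
  show ?case using Cons 1 by (simp add: sp sp2 khatri_rao_def)
qed

lemma filt_rev: "rev (filter (\<lambda>n. n \<noteq> t) [0..<Suc N]) =
   (if N \<noteq> t then N # rev (filter (\<lambda>n. n \<noteq> t) [0..<N]) else rev (filter (\<lambda>n. n \<noteq> t) [0..<N]))"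
  by simp

lemma prod_filt: "(\<Prod>m\<leftarrow>rev (filter (\<lambda>n. n \<noteq> t) [0..<N]). I m) = (\<Prod>m\<in>{..<N} - {t}. I m)"
proof -
  have "(\<Prod>m\<in>set (filter (\<lambda>n. n \<noteq> t) [0..<N]). I m) = (\<Prod>m\<leftarrow>filter (\<lambda>n. n \<noteq> t) [0..<N]. I m)"
    by (rule prod.distinct_set_conv_list) simp
  moreover have "set (filter (\<lambda>n. n \<noteq> t) [0..<N]) = {..<N} - {t}" by auto
  moreover have "prod_list (rev xs) = prod_list (xs::nat list)" for xs by (induction xs) auto
  ultimately show ?thesis by (simp add: rev_map[symmetric])
qed

lemma enc_mat_col: "enc I (rev (filter (\<lambda>n. n \<noteq> t) [0..<N])) d =
   (\<Sum>k\<in>{..<N} - {t}. d k * (\<Prod>m\<in>{..<k} - {t}. I m))"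
proof (induction N)
  case 0 then show ?case by simp
next
  case (Suc N)
  show ?case
  proof (cases "N = t")
    case True
    then have eq: "{..<Suc N} - {t} = {..<N} - {t}" by auto
    have r: "rev (filter (\<lambda>n. n \<noteq> t) [0..<Suc N]) = rev (filter (\<lambda>n. n \<noteq> t) [0..<N])"
      using True by simp
    show ?thesis unfolding r eq Suc.IH ..
  next
    case False
    let ?f = "\<lambda>k. d k * (\<Prod>m\<in>{..<k} - {t}. I m)"
    have eq: "{..<Suc N} - {t} = insert N ({..<N} - {t})" using False by auto
    have s: "(\<Sum>k\<in>{..<Suc N} - {t}. ?f k) = ?f N + (\<Sum>k\<in>{..<N} - {t}. ?f k)"
      unfolding eq by (rule sum.insert) auto
    have r: "rev (filter (\<lambda>n. n \<noteq> t) [0..<Suc N]) = N # rev (filter (\<lambda>n. n \<noteq> t) [0..<N])"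
      using False by simp
    show ?thesis unfolding r s enc.simps prod_filt Suc.IH ..
  qed
qed


lemma mat_sum:
  fixes Y :: "nat list \<Rightarrow> real"
  assumes k': "k' < N" and p: "p < I k'"
  shows "(\<Sum>c<(\<Prod>j\<in>{..<N}-{k'}. I j). matricize N I k' Y p c * kr_except N I sig A k' c q) =
    (\<Sum>is\<in>{is\<in>tidx N I. is ! k' = p}. Y is * (\<Prod>m\<in>{..<N}-{k'}. A (sig m) (is ! m) q))"
proof -
  define L where "L = rev (filter (\<lambda>n. n \<noteq> k') [0..<N])"
  define S where "S = {is\<in>tidx N I. is ! k' = p}"
  have setL: "set L = {..<N}-{k'}" unfolding L_def by auto
  have dL: "distinct L" unfolding L_def by simp
  have C: "(\<Prod>j\<in>{..<N}-{k'}. I j) = (\<Prod>m\<leftarrow>L. I m)" unfolding L_def by (rule prod_filt[symmetric])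
  have mc: "mat_col N I k' xs = enc I L (\<lambda>n. xs ! n)" for xs
    unfolding mat_col_def L_def by (rule enc_mat_col[symmetric])
  have inS: "\<forall>n\<in>set L. xs ! n < I n" if "xs \<in> S" for xs
    using that setL by (auto simp: S_def tidx_def)
  have uniq: "xs1 = xs2" if "xs1 \<in> S" "xs2 \<in> S" "mat_col N I k' xs1 = mat_col N I k' xs2" for xs1 xs2
  proof -
    have "\<forall>n\<in>set L. xs1 ! n = xs2 ! n"
      using enc_inj[OF inS[OF that(1)] inS[OF that(2)]] that(3) unfolding mc by blast
    moreover have "length xs1 = N" "length xs2 = N" "xs1 ! k' = p" "xs2 ! k' = p"
      using that(1,2) by (auto simp: S_def tidx_def)
    ultimately show ?thesis using setL
      by (intro nth_equalityI) (simp, metis Diff_iff lessThan_iff singletonD)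
  qed
  have sym: "(\<Sum>c<(\<Prod>j\<in>{..<N}-{k'}. I j). matricize N I k' Y p c * kr_except N I sig A k' c q) =
     (\<Sum>xs\<in>S. Y xs * (\<Prod>m\<in>{..<N}-{k'}. A (sig m) (xs ! m) q))"
  proof (rule sum.reindex_cong[where l = "mat_col N I k'"])
    show "inj_on (mat_col N I k') S" using uniq by (auto intro: inj_onI)
    show "{..<\<Prod>j\<in>{..<N} - {k'}. I j} = mat_col N I k' ` S"
    proof
      show "mat_col N I k' ` S \<subseteq> {..<\<Prod>j\<in>{..<N} - {k'}. I j}"
        using enc_lt inS unfolding C mc by auto
      show "{..<\<Prod>j\<in>{..<N} - {k'}. I j} \<subseteq> mat_col N I k' ` S"
      proof
        fix c assume "c \<in> {..<\<Prod>j\<in>{..<N} - {k'}. I j}"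
        then obtain d where d: "\<forall>n\<in>set L. d n < I n" "enc I L d = c"
          using enc_surj[OF dL, of c I] unfolding C by auto
        define xs where "xs = map (\<lambda>n. if n = k' then p else d n) [0..<N]"
        have xS: "xs \<in> S" using d(1) setL p k' by (auto simp: xs_def S_def tidx_def)
        have "enc I L (\<lambda>n. xs ! n) = enc I L d"
          by (rule enc_cong) (use setL in \<open>auto simp: xs_def\<close>)
        then have "mat_col N I k' xs = c" using d(2) mc by simp
        then show "c \<in> mat_col N I k' ` S" using xS by blast
      qed
    qed
    fix xs assume x: "xs \<in> S"
    have m: "matricize N I k' Y p (mat_col N I k' xs) = Y xs"
    proof -
      have "(THE is. is \<in> tidx N I \<and> is ! k' = p \<and> mat_col N I k' is = mat_col N I k' xs) = xs"
        by (rule the_equality) (use x uniq in \<open>auto simp: S_def\<close>)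
      then show ?thesis unfolding matricize_def by simp
    qed
    have "kr_except N I sig A k' (mat_col N I k' xs) q = (\<Prod>n\<leftarrow>L. A (sig n) (xs ! n) q)"
      unfolding kr_except_def mc L_def[symmetric] by (rule kr_enc[OF inS[OF x]])
    also have "\<dots> = (\<Prod>m\<in>{..<N}-{k'}. A (sig m) (xs ! m) q)"
      unfolding setL[symmetric] by (rule prod.distinct_set_conv_list[OF dL, symmetric])
    finally show "matricize N I k' Y p (mat_col N I k' xs) * kr_except N I sig A k' (mat_col N I k' xs) q
       = Y xs * (\<Prod>m\<in>{..<N}-{k'}. A (sig m) (xs ! m) q)" using m by simp
  qed
  then show ?thesis unfolding S_def .
qed


lemma upd_eval: "(A(k := (A k)(p := (A k p)(q := t)))) c i j =
   (if c = k \<and> i = p \<and> j = q then t else A c i j)"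
  by auto

lemma model_deriv:
  assumes q: "q < r"
  shows "((\<lambda>t. cp_model N r sig lam (A(k := (A k)(p := (A k p)(q := t)))) is) has_real_derivative
     (lam q * (\<Sum>n\<in>{n\<in>{..<N}. sig n = k \<and> is ! n = p}. \<Prod>n'\<in>{..<N}-{n}. A (sig n') (is ! n') q)))
     (at (A k p q))"
proof -
  define C where "C n \<longleftrightarrow> sig n = k \<and> is ! n = p" for n
  define f where "f j n t = (if C n \<and> j = q then t else A (sig n) (is ! n) j)" for j n and t :: real
  have eq: "cp_model N r sig lam (A(k := (A k)(p := (A k p)(q := t)))) is =
     (\<Sum>j<r. lam j * (\<Prod>n<N. f j n t))" for t
    unfolding cp_model_def f_def C_def upd_eval by simp
  have fz: "f j n (A k p q) = A (sig n) (is ! n) j" for j n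
    unfolding f_def C_def by auto
  have df: "(f j n has_real_derivative (if C n \<and> j = q then 1 else 0)) (at z)" for j n z
    unfolding f_def by (cases "C n \<and> j = q") (auto intro!: derivative_eq_intros)
  have D: "((\<lambda>t. \<Sum>j<r. lam j * (\<Prod>n<N. f j n t)) has_real_derivative
     (\<Sum>j<r. lam j * (\<Sum>n<N. (if C n \<and> j = q then 1 else 0) * (\<Prod>n'\<in>{..<N}-{n}. f j n' (A k p q)))))
     (at (A k p q))"
    by (intro DERIV_sum DERIV_cmult has_field_derivative_prod df)
  have "(\<Sum>j<r. lam j * (\<Sum>n<N. (if C n \<and> j = q then 1 else 0) * (\<Prod>n'\<in>{..<N}-{n}. f j n' (A k p q))))
      = (\<Sum>j<r. if j = q then lam q * (\<Sum>n<N. if C n then (\<Prod>n'\<in>{..<N}-{n}. A (sig n') (is ! n') q) else 0) else 0)"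
    by (intro sum.cong refl) (auto simp: fz intro!: sum.cong)
  also have "\<dots> = lam q * (\<Sum>n<N. if C n then (\<Prod>n'\<in>{..<N}-{n}. A (sig n') (is ! n') q) else 0)"
    using q by (simp add: sum.delta)
  also have "\<dots> = lam q * (\<Sum>n\<in>{n\<in>{..<N}. sig n = k \<and> is ! n = p}. \<Prod>n'\<in>{..<N}-{n}. A (sig n') (is ! n') q)"
    by (simp only: sum.inter_filter[OF finite_lessThan] C_def)
  finally show ?thesis using D unfolding eq by simp
qed


lemma swap_sum:
  fixes Y :: "nat list \<Rightarrow> real"
  assumes hY: "\<And>\<pi> is. \<pi> permutes {..<N} \<Longrightarrow> (\<forall>n<N. sig (\<pi> n) = sig n) \<Longrightarrow> is \<in> tidx N I \<Longrightarrow>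
      Y (map (\<lambda>n. is ! \<pi> n) [0..<N]) = Y is"
    and hI: "\<And>m n. sig m = sig n \<Longrightarrow> I m = I n"
    and n: "n < N" and k': "k' < N" and s: "sig n = sig k'"
  shows "(\<Sum>is\<in>{is\<in>tidx N I. is ! n = p}. Y is * (\<Prod>m\<in>{..<N}-{n}. A (sig m) (is ! m) q)) =
         (\<Sum>is\<in>{is\<in>tidx N I. is ! k' = p}. Y is * (\<Prod>m\<in>{..<N}-{k'}. A (sig m) (is ! m) q))"
proof -
  define \<pi> where "\<pi> = Transposition.transpose n k'"
  define h where "h xs = map (\<lambda>m. xs ! \<pi> m) [0..<N]" for xs :: "nat list"
  have pp: "\<pi> permutes {..<N}" unfolding \<pi>_def using n k' by (intro permutes_swap_id) auto
  have pinv: "\<pi> (\<pi> m) = m" for m unfolding \<pi>_def by simp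
  have plt: "m < N \<Longrightarrow> \<pi> m < N" for m unfolding \<pi>_def using n k' by (cases "m = n"; cases "m = k'") auto
  have psig: "sig (\<pi> m) = sig m" for m unfolding \<pi>_def using s by (cases "m = n"; cases "m = k'") auto
  have pn: "\<pi> n = k'" "\<pi> k' = n" unfolding \<pi>_def by auto
  have hh: "h (h xs) = xs" if "length xs = N" for xs
    using that by (intro nth_equalityI) (auto simp: h_def plt pinv)
  have hT: "h xs \<in> tidx N I" if "xs \<in> tidx N I" for xs
    using that plt hI[OF psig] by (auto simp: h_def tidx_def) (metis plt)
  have hn: "h xs ! a = xs ! b" if "\<pi> a = b" "a < N" for xs a b
    using that by (simp add: h_def)
  have bij: "bij_betw \<pi> ({..<N}-{n}) ({..<N}-{k'})"
  proof (rule bij_betw_imageI)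
    show "inj_on \<pi> ({..<N}-{n})" using permutes_inj[OF pp] by (rule inj_on_subset) auto
    have "\<pi> ` ({..<N}-{n}) = \<pi> ` {..<N} - \<pi> ` {n}" by (rule image_set_diff[OF permutes_inj[OF pp]])
    then show "\<pi> ` ({..<N}-{n}) = {..<N}-{k'}" using permutes_image[OF pp] pn by simp
  qed
  have bij2: "bij_betw \<pi> ({..<N}-{k'}) ({..<N}-{n})"
  proof (rule bij_betw_imageI)
    show "inj_on \<pi> ({..<N}-{k'})" using permutes_inj[OF pp] by (rule inj_on_subset) auto
    have "\<pi> ` ({..<N}-{k'}) = \<pi> ` {..<N} - \<pi> ` {k'}" by (rule image_set_diff[OF permutes_inj[OF pp]])
    then show "\<pi> ` ({..<N}-{k'}) = {..<N}-{n}" using permutes_image[OF pp] pn by simp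
  qed
  show ?thesis
  proof (rule sum.reindex_bij_witness[where i = h and j = h])
    fix a assume a: "a \<in> {is\<in>tidx N I. is ! n = p}"
    then show "h (h a) = a" by (intro hh) (simp add: tidx_def)
    show "h a \<in> {is\<in>tidx N I. is ! k' = p}" using a hT hn[of k' n] pn k' by auto
    have "Y (h a) = Y a" unfolding h_def using a pp psig by (intro hY) auto
    moreover have "(\<Prod>m\<in>{..<N}-{k'}. A (sig m) (h a ! m) q) = (\<Prod>m\<in>{..<N}-{k'}. A (sig (\<pi> m)) (a ! \<pi> m) q)"
      by (intro prod.cong refl) (auto simp: h_def psig)
    moreover have "\<dots> = (\<Prod>m\<in>{..<N}-{n}. A (sig m) (a ! m) q)"
      using prod.reindex_bij_betw[OF bij2, of "\<lambda>m. A (sig m) (a ! m) q"] by simp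
    ultimately show "Y (h a) * (\<Prod>m\<in>{..<N}-{k'}. A (sig m) (h a ! m) q) =
        Y a * (\<Prod>m\<in>{..<N}-{n}. A (sig m) (a ! m) q)" by simp
  next
    fix b assume b: "b \<in> {is\<in>tidx N I. is ! k' = p}"
    then show "h (h b) = b" by (intro hh) (simp add: tidx_def)
    show "h b \<in> {is\<in>tidx N I. is ! n = p}" using b hT hn[of n k'] pn n by auto
  qed
qed


lemma model_sym:
  assumes "\<pi> permutes {..<N}" "\<forall>n<N. sig (\<pi> n) = sig n" "length xs = N"
  shows "cp_model N r sig lam A (map (\<lambda>n. xs ! \<pi> n) [0..<N]) = cp_model N r sig lam A xs"
  unfolding cp_model_def
proof (intro sum.cong refl arg_cong2[where f = "(*)"])
  fix j
  have "(\<Prod>n<N. A (sig n) (map (\<lambda>n. xs ! \<pi> n) [0..<N] ! n) j) = (\<Prod>n<N. A (sig (\<pi> n)) (xs ! \<pi> n) j)"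
    using assms(2) by (intro prod.cong refl) auto
  also have "\<dots> = (\<Prod>n<N. A (sig n) (xs ! n) j)"
    using prod.permute[OF assms(1), of "\<lambda>n. A (sig n) (xs ! n) j"] by (simp add: o_def)
  finally show "(\<Prod>n<N. A (sig n) (map (\<lambda>n. xs ! \<pi> n) [0..<N] ! n) j) = (\<Prod>n<N. A (sig n) (xs ! n) j)" .
qed

lemma finite_tidx: "finite (tidx N I)"
proof -
  have "tidx N I \<subseteq> {xs. set xs \<subseteq> {..<(\<Sum>n<N. I n)} \<and> length xs = N}"
  proof
    fix xs assume x: "xs \<in> tidx N I"
    have "xs ! n < (\<Sum>n<N. I n)" if "n < N" for n
    proof -
      have "xs ! n < I n" using x that by (auto simp: tidx_def)
      also have "I n \<le> (\<Sum>n<N. I n)" using that by (intro member_le_sum) auto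
      finally show ?thesis .
    qed
    then show "xs \<in> {xs. set xs \<subseteq> {..<(\<Sum>n<N. I n)} \<and> length xs = N}"
      using x by (auto simp: tidx_def in_set_conv_nth)
  qed
  then show ?thesis using finite_lists_length_eq[of "{..<(\<Sum>n<N. I n)}" N]
    by (auto intro: finite_subset)
qed

theorem corollary1:
  fixes N K r :: nat
    and sig :: "nat \<Rightarrow> nat" and It :: "nat \<Rightarrow> nat" and I :: "nat \<Rightarrow> nat"
    and ell :: "real \<Rightarrow> real \<Rightarrow> real"
    and X :: "nat list \<Rightarrow> real"
    and lam :: "nat \<Rightarrow> real"
    and A :: "nat \<Rightarrow> nat \<Rightarrow> nat \<Rightarrow> real"
    and k k' p q :: nat
  assumes sig_range: "\<forall>n<N. sig n < K"
    and cells_nonempty: "\<forall>c<K. \<exists>n<N. sig n = c"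
    and It_pos: "\<forall>c<K. 0 < It c"
    and I_def: "\<forall>n. I n = It (sig n)"
    and ell_diff: "\<forall>x m. (\<lambda>m. ell x m) differentiable (at m)"
    and X_sym: "partition_symmetric N I sig X"
    and k_lt: "k < K"
    and k'_in: "k' < N" "sig k' = k"
    and p_lt: "p < It k" and q_lt: "q < r"
  shows "((\<lambda>t. cp_loss ell N I r sig X lam (A(k := (A k)(p := (A k p)(q := t)))))
          has_real_derivative
            (real (card {n. n < N \<and> sig n = k}) *
             matmul r
               (matmul (\<Prod>j\<in>{..<N} - {k'}. I j)
                  (matricize N I k' (\<lambda>is. deriv (ell (X is)) (cp_model N r sig lam A is)))
                  (kr_except N I sig A k'))
               (diag_mat lam) p q))
         (at (A k p q))"
proof -
  let ?A' = "\<lambda>t. A(k := (A k)(p := (A k p)(q := t)))"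
  define y where "y xs = deriv (ell (X xs)) (cp_model N r sig lam A xs)" for xs
  define Pm where "Pm n xs = (\<Prod>m\<in>{..<N}-{n}. A (sig m) (xs ! m) q)" for n xs
  define T where "T = tidx N I"
  define G where "G = (\<Sum>xs\<in>{xs\<in>T. xs ! k' = p}. y xs * Pm k' xs)"
  have fT: "finite T" unfolding T_def by (rule finite_tidx)
  have A0: "?A' (A k p q) = A" by simp
  have D: "((\<lambda>t. cp_loss ell N I r sig X lam (?A' t)) has_real_derivative
     (\<Sum>xs\<in>T. y xs * (lam q * (\<Sum>n\<in>{n\<in>{..<N}. sig n = k \<and> xs ! n = p}. Pm n xs)))) (at (A k p q))"
    unfolding cp_loss_def T_def
  proof (rule DERIV_sum)
    fix xs
    have "DERIV (ell (X xs)) (cp_model N r sig lam (?A' (A k p q)) xs) :> y xs"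
      unfolding A0 y_def using ell_diff DERIV_deriv_iff_real_differentiable by blast
    then show "((\<lambda>t. ell (X xs) (cp_model N r sig lam (?A' t) xs)) has_real_derivative
        y xs * (lam q * (\<Sum>n\<in>{n\<in>{..<N}. sig n = k \<and> xs ! n = p}. Pm n xs))) (at (A k p q))"
      unfolding Pm_def by (rule DERIV_chain2[OF _ model_deriv[OF q_lt]])
  qed
  have hI: "I m = I n" if "sig m = sig n" for m n using I_def that by simp
  have hY: "y (map (\<lambda>n. xs ! \<pi> n) [0..<N]) = y xs"
    if "\<pi> permutes {..<N}" "\<forall>n<N. sig (\<pi> n) = sig n" "xs \<in> tidx N I" for \<pi> xs
  proof -
    have "X (map (\<lambda>n. xs ! \<pi> n) [0..<N]) = X xs" using X_sym that unfolding partition_symmetric_def by blast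
    moreover have "length xs = N" using that(3) by (simp add: tidx_def)
    ultimately show ?thesis unfolding y_def using model_sym[OF that(1,2)] by simp
  qed
  have cellG: "(\<Sum>xs\<in>{xs\<in>T. xs ! n = p}. y xs * Pm n xs) = G" if "n < N" "sig n = k" for n
    unfolding G_def Pm_def T_def
    by (rule swap_sum[where Y = y, OF hY hI that(1) k'_in(1)]) (use that k'_in in auto)
  have "(\<Sum>xs\<in>T. y xs * (lam q * (\<Sum>n\<in>{n\<in>{..<N}. sig n = k \<and> xs ! n = p}. Pm n xs)))
      = lam q * (\<Sum>xs\<in>T. \<Sum>n\<in>{n\<in>{..<N}. sig n = k}. if xs ! n = p then y xs * Pm n xs else 0)"
  proof -
    have st: "{n\<in>{..<N}. sig n = k \<and> xs ! n = p} = {n\<in>{n\<in>{..<N}. sig n = k}. xs ! n = p}" for xs by auto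
    have e: "y xs * (lam q * (\<Sum>n\<in>{n\<in>{..<N}. sig n = k \<and> xs ! n = p}. Pm n xs)) =
       lam q * (\<Sum>n\<in>{n\<in>{..<N}. sig n = k}. if xs ! n = p then y xs * Pm n xs else 0)" for xs
    proof -
      have "(\<Sum>n\<in>{n\<in>{..<N}. sig n = k \<and> xs ! n = p}. y xs * Pm n xs) =
          (\<Sum>n\<in>{n\<in>{..<N}. sig n = k}. if xs ! n = p then y xs * Pm n xs else 0)"
        unfolding st by (rule sum.inter_filter) simp
      then show ?thesis by (simp add: sum_distrib_left[symmetric] mult_ac)
    qed
    show ?thesis unfolding e by (simp add: sum_distrib_left)
  qed
  also have "\<dots> = lam q * (\<Sum>n\<in>{n\<in>{..<N}. sig n = k}. \<Sum>xs\<in>T. if xs ! n = p then y xs * Pm n xs else 0)"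
    by (subst sum.swap) simp
  also have "\<dots> = lam q * (\<Sum>n\<in>{n\<in>{..<N}. sig n = k}. G)"
    using cellG fT by (simp add: sum.inter_filter[symmetric] del: sum.If_cases)
  also have "\<dots> = real (card {n. n < N \<and> sig n = k}) * G * lam q" by simp
  finally have L: "(\<Sum>xs\<in>T. y xs * (lam q * (\<Sum>n\<in>{n\<in>{..<N}. sig n = k \<and> xs ! n = p}. Pm n xs)))
      = real (card {n. n < N \<and> sig n = k}) * G * lam q" .
  have pk: "p < I k'" using p_lt I_def k'_in by simp
  have R: "matmul r (matmul (\<Prod>j\<in>{..<N} - {k'}. I j)
                  (matricize N I k' (\<lambda>is. deriv (ell (X is)) (cp_model N r sig lam A is)))
                  (kr_except N I sig A k')) (diag_mat lam) p q = G * lam q"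
  proof -
    have "matmul (\<Prod>j\<in>{..<N} - {k'}. I j)
                  (matricize N I k' (\<lambda>is. deriv (ell (X is)) (cp_model N r sig lam A is)))
                  (kr_except N I sig A k') p q = G"
      unfolding matmul_def G_def T_def Pm_def y_def by (rule mat_sum[where I = I, OF k'_in(1) pk])
    then show ?thesis unfolding matmul_def[of r] diag_mat_def using q_lt
      by (simp add: if_distrib[of "(*) _"] sum.delta cong: if_cong)
  qed
  show ?thesis using D unfolding L R by (simp add: mult_ac)
qed

end
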